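(* Consider three agents $[3]=\{1,2,3\}$ and the twelve items $\mathcal{M}=\{(j,k): j\in\{1,2,3\},k\in\{1,2,3,4\}\}$. Let $$B=\begin{pmatrix}1&1&1&1\\1&1&1&1\\1&1&1&1\end{pmatrix},\ O=\begin{pmatrix}17&25&12&1\\2&22&3&28\\11&0&21&23\end{pmatrix},\ E^1=\begin{pmatrix}-3&1&1&1\\0&0&0&0\\0&0&0&0\end{pmatrix},$$ $$E^2=\begin{pmatrix}-3&1&0&0\\1&0&0&0\\1&0&0&0\end{pmatrix},\ E^3=\begin{pmatrix}-3&0&1&0\\0&0&1&0\\0&0&0&1\end{pmatrix},$$ and for $i\in[3]$ let $u_i$ be the additive function with $u_i((j,k))=10^6 B_{jk}+10^3 O_{jk}+E^i_{jk}$. Let $d_i=-u_i$. Then there is no allocation $(S_1,S_2,S_3)\in\Pi_3(\mathcal{M})$ with $d_i(S_i)\ge MmS_{d_i}^3(\mathcal{M})$ for all $i\in[3]$. In particular, an MmS allocation for chores need not exist.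
   Context: $\Pi_3(\mathcal{M})$ is the set of ordered 3-partitions of $\mathcal{M}$ (parts may be empty). For an additive function $v$ on subsets of $\mathcal{M}$, $MmS_{v}^N(\mathcal{M}):=\max_{(S_1,\ldots,S_N)\in\Pi_N(\mathcal{M})}\min_{j} v(S_j)$. An MmS allocation for an instance with utilities $(v_i)$ is an allocation with $v_i(S_i)\ge MmS_{v_i}^N(\mathcal{M})$ for all agents $i$. *)

theory Defs
  imports Complex_Main
begin

text \<open>Ordered N-partitions of M (parts indexed by 1..N, may be empty);
  parts outside the index range are fixed to be empty.\<close>
definition partitions :: "nat \<Rightarrow> 'a set \<Rightarrow> (nat \<Rightarrow> 'a set) set" where
  "partitions N M = {S. (\<forall>i\<in>{1..N}. S i \<subseteq> M)
      \<and> (\<forall>i\<in>{1..N}. \<forall>j\<in>{1..N}. i \<noteq> j \<longrightarrow> S i \<inter> S j = {})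
      \<and> (\<Union>i\<in>{1..N}. S i) = M
      \<and> (\<forall>i. i \<notin> {1..N} \<longrightarrow> S i = {})}"

definition MmS :: "nat \<Rightarrow> ('a set \<Rightarrow> real) \<Rightarrow> 'a set \<Rightarrow> real" where
  "MmS N v M = Max ((\<lambda>S. Min ((\<lambda>j. v (S j)) ` {1..N})) ` partitions N M)"

definition items :: "(nat \<times> nat) set" where
  "items = {1..3} \<times> {1..4}"

definition Bmat :: "nat \<Rightarrow> nat \<Rightarrow> real" where
  "Bmat j k = 1"

definition Omat :: "nat \<Rightarrow> nat \<Rightarrow> real" where
  "Omat j k = [[17,25,12,1],[2,22,3,28],[11,0,21,23]] ! (j - 1) ! (k - 1)"

definition Emat :: "nat \<Rightarrow> nat \<Rightarrow> nat \<Rightarrow> real" where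
  "Emat i j k =
     [ [[-3,1,1,1],[0,0,0,0],[0,0,0,0]],
       [[-3,1,0,0],[1,0,0,0],[1,0,0,0]],
       [[-3,0,1,0],[0,0,1,0],[0,0,0,1]] ] ! (i - 1) ! (j - 1) ! (k - 1)"

definition uitem :: "nat \<Rightarrow> nat \<times> nat \<Rightarrow> real" where
  "uitem i x = 10^6 * Bmat (fst x) (snd x) + 10^3 * Omat (fst x) (snd x) + Emat i (fst x) (snd x)"

definition u :: "nat \<Rightarrow> (nat \<times> nat) set \<Rightarrow> real" where
  "u i S = (\<Sum>x\<in>S. uitem i x)"

definition d :: "nat \<Rightarrow> (nat \<times> nat) set \<Rightarrow> real" where
  "d i S = - u i S"

end

theory Submission
  imports Defs
begin

lemma one_three: "{1..3::nat} = {1,2,3}" by auto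
lemma one_four: "{1..4::nat} = {1,2,3,4}" by auto
lemma items_eq: "items = {(1,1),(1,2),(1,3),(1,4),(2,1),(2,2),(2,3),(2,4),(3,1),(3,2),(3,3),(3,4)}"
  unfolding items_def one_three one_four by blast

definition mk :: "'a set \<Rightarrow> 'a set \<Rightarrow> 'a set \<Rightarrow> nat \<Rightarrow> 'a set" where
  "mk A B C = (\<lambda>i. if i = 1 then A else if i = 2 then B else if i = 3 then C else {})"

lemma fin_part: "finite (partitions 3 items)"
proof -
  have "partitions 3 items \<subseteq> (\<lambda>(A,B,C). mk A B C) ` (Pow items \<times> Pow items \<times> Pow items)"
  proof
    fix S assume S: "S \<in> partitions 3 items"
    have "S = mk (S 1) (S 2) (S 3)"
    proof
      fix i show "S i = mk (S 1) (S 2) (S 3) i"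
        using S unfolding partitions_def mk_def
        by (cases "i = 1 \<or> i = 2 \<or> i = 3") auto
    qed
    moreover have "S 1 \<in> Pow items" "S 2 \<in> Pow items" "S 3 \<in> Pow items"
      using S unfolding partitions_def by auto
    ultimately show "S \<in> (\<lambda>(A,B,C). mk A B C) ` (Pow items \<times> Pow items \<times> Pow items)"
      by (intro rev_image_eqI[where x="(S 1, S 2, S 3)"]) auto
  qed
  moreover have "finite items" by (simp add: items_eq)
  ultimately show ?thesis by (meson finite_Pow_iff finite_SigmaI finite_imageI finite_subset)
qed

lemma mms_ge:
  assumes "W \<in> partitions 3 items" "Min ((\<lambda>j. v (W j)) ` {1..3}) = m"
  shows "MmS 3 v items \<ge> m"
proof -
  have "m \<in> (\<lambda>S. Min ((\<lambda>j. v (S j)) ` {1..3})) ` partitions 3 items"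
    using assms by (intro rev_image_eqI[where x=W]) auto
  then show ?thesis unfolding MmS_def using fin_part by (intro Max_ge) auto
qed


lemma uv_1_1_1 [simp]: "uitem 1 (1,1) = 1016997"
  by (simp add: uitem_def Bmat_def Omat_def Emat_def)
lemma uv_1_1_2 [simp]: "uitem 1 (1,2) = 1025001"
  by (simp add: uitem_def Bmat_def Omat_def Emat_def)
lemma uv_1_1_3 [simp]: "uitem 1 (1,3) = 1012001"
  by (simp add: uitem_def Bmat_def Omat_def Emat_def)
lemma uv_1_1_4 [simp]: "uitem 1 (1,4) = 1001001"
  by (simp add: uitem_def Bmat_def Omat_def Emat_def)
lemma uv_1_2_1 [simp]: "uitem 1 (2,1) = 1002000"
  by (simp add: uitem_def Bmat_def Omat_def Emat_def)
lemma uv_1_2_2 [simp]: "uitem 1 (2,2) = 1022000"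
  by (simp add: uitem_def Bmat_def Omat_def Emat_def)
lemma uv_1_2_3 [simp]: "uitem 1 (2,3) = 1003000"
  by (simp add: uitem_def Bmat_def Omat_def Emat_def)
lemma uv_1_2_4 [simp]: "uitem 1 (2,4) = 1028000"
  by (simp add: uitem_def Bmat_def Omat_def Emat_def)
lemma uv_1_3_1 [simp]: "uitem 1 (3,1) = 1011000"
  by (simp add: uitem_def Bmat_def Omat_def Emat_def)
lemma uv_1_3_2 [simp]: "uitem 1 (3,2) = 1000000"
  by (simp add: uitem_def Bmat_def Omat_def Emat_def)
lemma uv_1_3_3 [simp]: "uitem 1 (3,3) = 1021000"
  by (simp add: uitem_def Bmat_def Omat_def Emat_def)
lemma uv_1_3_4 [simp]: "uitem 1 (3,4) = 1023000"
  by (simp add: uitem_def Bmat_def Omat_def Emat_def)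
lemma uv_2_1_1 [simp]: "uitem 2 (1,1) = 1016997"
  by (simp add: uitem_def Bmat_def Omat_def Emat_def)
lemma uv_2_1_2 [simp]: "uitem 2 (1,2) = 1025001"
  by (simp add: uitem_def Bmat_def Omat_def Emat_def)
lemma uv_2_1_3 [simp]: "uitem 2 (1,3) = 1012000"
  by (simp add: uitem_def Bmat_def Omat_def Emat_def)
lemma uv_2_1_4 [simp]: "uitem 2 (1,4) = 1001000"
  by (simp add: uitem_def Bmat_def Omat_def Emat_def)
lemma uv_2_2_1 [simp]: "uitem 2 (2,1) = 1002001"
  by (simp add: uitem_def Bmat_def Omat_def Emat_def)
lemma uv_2_2_2 [simp]: "uitem 2 (2,2) = 1022000"
  by (simp add: uitem_def Bmat_def Omat_def Emat_def)
lemma uv_2_2_3 [simp]: "uitem 2 (2,3) = 1003000"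
  by (simp add: uitem_def Bmat_def Omat_def Emat_def)
lemma uv_2_2_4 [simp]: "uitem 2 (2,4) = 1028000"
  by (simp add: uitem_def Bmat_def Omat_def Emat_def)
lemma uv_2_3_1 [simp]: "uitem 2 (3,1) = 1011001"
  by (simp add: uitem_def Bmat_def Omat_def Emat_def)
lemma uv_2_3_2 [simp]: "uitem 2 (3,2) = 1000000"
  by (simp add: uitem_def Bmat_def Omat_def Emat_def)
lemma uv_2_3_3 [simp]: "uitem 2 (3,3) = 1021000"
  by (simp add: uitem_def Bmat_def Omat_def Emat_def)
lemma uv_2_3_4 [simp]: "uitem 2 (3,4) = 1023000"
  by (simp add: uitem_def Bmat_def Omat_def Emat_def)
lemma uv_3_1_1 [simp]: "uitem 3 (1,1) = 1016997"
  by (simp add: uitem_def Bmat_def Omat_def Emat_def)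
lemma uv_3_1_2 [simp]: "uitem 3 (1,2) = 1025000"
  by (simp add: uitem_def Bmat_def Omat_def Emat_def)
lemma uv_3_1_3 [simp]: "uitem 3 (1,3) = 1012001"
  by (simp add: uitem_def Bmat_def Omat_def Emat_def)
lemma uv_3_1_4 [simp]: "uitem 3 (1,4) = 1001000"
  by (simp add: uitem_def Bmat_def Omat_def Emat_def)
lemma uv_3_2_1 [simp]: "uitem 3 (2,1) = 1002000"
  by (simp add: uitem_def Bmat_def Omat_def Emat_def)
lemma uv_3_2_2 [simp]: "uitem 3 (2,2) = 1022000"
  by (simp add: uitem_def Bmat_def Omat_def Emat_def)
lemma uv_3_2_3 [simp]: "uitem 3 (2,3) = 1003001"
  by (simp add: uitem_def Bmat_def Omat_def Emat_def)
lemma uv_3_2_4 [simp]: "uitem 3 (2,4) = 1028000"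
  by (simp add: uitem_def Bmat_def Omat_def Emat_def)
lemma uv_3_3_1 [simp]: "uitem 3 (3,1) = 1011000"
  by (simp add: uitem_def Bmat_def Omat_def Emat_def)
lemma uv_3_3_2 [simp]: "uitem 3 (3,2) = 1000000"
  by (simp add: uitem_def Bmat_def Omat_def Emat_def)
lemma uv_3_3_3 [simp]: "uitem 3 (3,3) = 1021000"
  by (simp add: uitem_def Bmat_def Omat_def Emat_def)
lemma uv_3_3_4 [simp]: "uitem 3 (3,4) = 1023001"
  by (simp add: uitem_def Bmat_def Omat_def Emat_def)

lemma uvs_1_1_1 [simp]: "uitem (Suc 0) (Suc 0,Suc 0) = 1016997"
  using uv_1_1_1 by (simp only: One_nat_def)
lemma uvs_1_1_2 [simp]: "uitem (Suc 0) (Suc 0,2) = 1025001"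
  using uv_1_1_2 by (simp only: One_nat_def)
lemma uvs_1_1_3 [simp]: "uitem (Suc 0) (Suc 0,3) = 1012001"
  using uv_1_1_3 by (simp only: One_nat_def)
lemma uvs_1_1_4 [simp]: "uitem (Suc 0) (Suc 0,4) = 1001001"
  using uv_1_1_4 by (simp only: One_nat_def)
lemma uvs_1_2_1 [simp]: "uitem (Suc 0) (2,Suc 0) = 1002000"
  using uv_1_2_1 by (simp only: One_nat_def)
lemma uvs_1_2_2 [simp]: "uitem (Suc 0) (2,2) = 1022000"
  using uv_1_2_2 by (simp only: One_nat_def)
lemma uvs_1_2_3 [simp]: "uitem (Suc 0) (2,3) = 1003000"
  using uv_1_2_3 by (simp only: One_nat_def)
lemma uvs_1_2_4 [simp]: "uitem (Suc 0) (2,4) = 1028000"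
  using uv_1_2_4 by (simp only: One_nat_def)
lemma uvs_1_3_1 [simp]: "uitem (Suc 0) (3,Suc 0) = 1011000"
  using uv_1_3_1 by (simp only: One_nat_def)
lemma uvs_1_3_2 [simp]: "uitem (Suc 0) (3,2) = 1000000"
  using uv_1_3_2 by (simp only: One_nat_def)
lemma uvs_1_3_3 [simp]: "uitem (Suc 0) (3,3) = 1021000"
  using uv_1_3_3 by (simp only: One_nat_def)
lemma uvs_1_3_4 [simp]: "uitem (Suc 0) (3,4) = 1023000"
  using uv_1_3_4 by (simp only: One_nat_def)
lemma uvs_2_1_1 [simp]: "uitem (2) (Suc 0,Suc 0) = 1016997"
  using uv_2_1_1 by (simp only: One_nat_def)
lemma uvs_2_1_2 [simp]: "uitem (2) (Suc 0,2) = 1025001"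
  using uv_2_1_2 by (simp only: One_nat_def)
lemma uvs_2_1_3 [simp]: "uitem (2) (Suc 0,3) = 1012000"
  using uv_2_1_3 by (simp only: One_nat_def)
lemma uvs_2_1_4 [simp]: "uitem (2) (Suc 0,4) = 1001000"
  using uv_2_1_4 by (simp only: One_nat_def)
lemma uvs_2_2_1 [simp]: "uitem (2) (2,Suc 0) = 1002001"
  using uv_2_2_1 by (simp only: One_nat_def)
lemma uvs_2_2_2 [simp]: "uitem (2) (2,2) = 1022000"
  using uv_2_2_2 by (simp only: One_nat_def)
lemma uvs_2_2_3 [simp]: "uitem (2) (2,3) = 1003000"
  using uv_2_2_3 by (simp only: One_nat_def)
lemma uvs_2_2_4 [simp]: "uitem (2) (2,4) = 1028000"
  using uv_2_2_4 by (simp only: One_nat_def)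
lemma uvs_2_3_1 [simp]: "uitem (2) (3,Suc 0) = 1011001"
  using uv_2_3_1 by (simp only: One_nat_def)
lemma uvs_2_3_2 [simp]: "uitem (2) (3,2) = 1000000"
  using uv_2_3_2 by (simp only: One_nat_def)
lemma uvs_2_3_3 [simp]: "uitem (2) (3,3) = 1021000"
  using uv_2_3_3 by (simp only: One_nat_def)
lemma uvs_2_3_4 [simp]: "uitem (2) (3,4) = 1023000"
  using uv_2_3_4 by (simp only: One_nat_def)
lemma uvs_3_1_1 [simp]: "uitem (3) (Suc 0,Suc 0) = 1016997"
  using uv_3_1_1 by (simp only: One_nat_def)
lemma uvs_3_1_2 [simp]: "uitem (3) (Suc 0,2) = 1025000"
  using uv_3_1_2 by (simp only: One_nat_def)
lemma uvs_3_1_3 [simp]: "uitem (3) (Suc 0,3) = 1012001"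
  using uv_3_1_3 by (simp only: One_nat_def)
lemma uvs_3_1_4 [simp]: "uitem (3) (Suc 0,4) = 1001000"
  using uv_3_1_4 by (simp only: One_nat_def)
lemma uvs_3_2_1 [simp]: "uitem (3) (2,Suc 0) = 1002000"
  using uv_3_2_1 by (simp only: One_nat_def)
lemma uvs_3_2_2 [simp]: "uitem (3) (2,2) = 1022000"
  using uv_3_2_2 by (simp only: One_nat_def)
lemma uvs_3_2_3 [simp]: "uitem (3) (2,3) = 1003001"
  using uv_3_2_3 by (simp only: One_nat_def)
lemma uvs_3_2_4 [simp]: "uitem (3) (2,4) = 1028000"
  using uv_3_2_4 by (simp only: One_nat_def)
lemma uvs_3_3_1 [simp]: "uitem (3) (3,Suc 0) = 1011000"
  using uv_3_3_1 by (simp only: One_nat_def)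
lemma uvs_3_3_2 [simp]: "uitem (3) (3,2) = 1000000"
  using uv_3_3_2 by (simp only: One_nat_def)
lemma uvs_3_3_3 [simp]: "uitem (3) (3,3) = 1021000"
  using uv_3_3_3 by (simp only: One_nat_def)
lemma uvs_3_3_4 [simp]: "uitem (3) (3,4) = 1023001"
  using uv_3_3_4 by (simp only: One_nat_def)

lemmas uvs_all = uvs_1_1_1 uvs_1_1_2 uvs_1_1_3 uvs_1_1_4 uvs_1_2_1 uvs_1_2_2 uvs_1_2_3 uvs_1_2_4 uvs_1_3_1 uvs_1_3_2 uvs_1_3_3 uvs_1_3_4 uvs_2_1_1 uvs_2_1_2 uvs_2_1_3 uvs_2_1_4 uvs_2_2_1 uvs_2_2_2 uvs_2_2_3 uvs_2_2_4 uvs_2_3_1 uvs_2_3_2 uvs_2_3_3 uvs_2_3_4 uvs_3_1_1 uvs_3_1_2 uvs_3_1_3 uvs_3_1_4 uvs_3_2_1 uvs_3_2_2 uvs_3_2_3 uvs_3_2_4 uvs_3_3_1 uvs_3_3_2 uvs_3_3_3 uvs_3_3_4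

lemmas U = d_def u_def
lemma W1: "mk {(1,1),(1,2),(1,3),(1,4)} {(2,1),(2,2),(2,3),(2,4)} {(3,1),(3,2),(3,3),(3,4)} \<in> partitions 3 items"
  unfolding partitions_def items_eq one_three mk_def by auto

lemma W2: "mk {(1,1),(1,2),(2,1),(3,1)} {(1,3),(2,2),(3,2),(3,3)} {(1,4),(2,3),(2,4),(3,4)} \<in> partitions 3 items"
  unfolding partitions_def items_eq one_three mk_def by auto

lemma W3: "mk {(1,1),(1,3),(2,3),(3,4)} {(1,2),(2,1),(2,4),(3,2)} {(1,4),(2,2),(3,1),(3,3)} \<in> partitions 3 items"
  unfolding partitions_def items_eq one_three mk_def by auto

lemma min_mk: "Min ((\<lambda>j. v (mk A B C j)) ` {1..3}) = min (v A) (min (v B) (v C))"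
  unfolding one_three mk_def by (simp add: min.assoc)

lemma M1: "MmS 3 (d 1) items \<ge> -4055000"
  by (rule mms_ge[OF W1]) (subst min_mk, simp add: U)

lemma M2: "MmS 3 (d 2) items \<ge> -4055000"
  by (rule mms_ge[OF W2]) (subst min_mk, simp add: U)

lemma M3: "MmS 3 (d 3) items \<ge> -4055000"
  by (rule mms_ge[OF W3]) (subst min_mk, simp add: U)

definition oval :: "nat \<times> nat \<Rightarrow> real" where "oval x = Omat (fst x) (snd x)"
definition evl :: "nat \<Rightarrow> nat \<times> nat \<Rightarrow> real" where "evl i x = Emat i (fst x) (snd x)"
lemma ov_1_1 [simp]: "oval (1,1) = 17" by (simp add: oval_def Omat_def)
lemma ovs_1_1 [simp]: "oval (Suc 0,Suc 0) = 17" using ov_1_1 by (simp only: One_nat_def)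
lemma ev_1_1_1 [simp]: "evl 1 (1,1) = - 3" by (simp add: evl_def Emat_def)
lemma evs_1_1_1 [simp]: "evl (Suc 0) (Suc 0,Suc 0) = - 3" using ev_1_1_1 by (simp only: One_nat_def)
lemma ev_2_1_1 [simp]: "evl 2 (1,1) = - 3" by (simp add: evl_def Emat_def)
lemma evs_2_1_1 [simp]: "evl (2) (Suc 0,Suc 0) = - 3" using ev_2_1_1 by (simp only: One_nat_def)
lemma ev_3_1_1 [simp]: "evl 3 (1,1) = - 3" by (simp add: evl_def Emat_def)
lemma evs_3_1_1 [simp]: "evl (3) (Suc 0,Suc 0) = - 3" using ev_3_1_1 by (simp only: One_nat_def)
lemma ov_1_2 [simp]: "oval (1,2) = 25" by (simp add: oval_def Omat_def)
lemma ovs_1_2 [simp]: "oval (Suc 0,2) = 25" using ov_1_2 by (simp only: One_nat_def)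
lemma ev_1_1_2 [simp]: "evl 1 (1,2) = 1" by (simp add: evl_def Emat_def)
lemma evs_1_1_2 [simp]: "evl (Suc 0) (Suc 0,2) = 1" using ev_1_1_2 by (simp only: One_nat_def)
lemma ev_2_1_2 [simp]: "evl 2 (1,2) = 1" by (simp add: evl_def Emat_def)
lemma evs_2_1_2 [simp]: "evl (2) (Suc 0,2) = 1" using ev_2_1_2 by (simp only: One_nat_def)
lemma ev_3_1_2 [simp]: "evl 3 (1,2) = 0" by (simp add: evl_def Emat_def)
lemma evs_3_1_2 [simp]: "evl (3) (Suc 0,2) = 0" using ev_3_1_2 by (simp only: One_nat_def)
lemma ov_1_3 [simp]: "oval (1,3) = 12" by (simp add: oval_def Omat_def)
lemma ovs_1_3 [simp]: "oval (Suc 0,3) = 12" using ov_1_3 by (simp only: One_nat_def)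
lemma ev_1_1_3 [simp]: "evl 1 (1,3) = 1" by (simp add: evl_def Emat_def)
lemma evs_1_1_3 [simp]: "evl (Suc 0) (Suc 0,3) = 1" using ev_1_1_3 by (simp only: One_nat_def)
lemma ev_2_1_3 [simp]: "evl 2 (1,3) = 0" by (simp add: evl_def Emat_def)
lemma evs_2_1_3 [simp]: "evl (2) (Suc 0,3) = 0" using ev_2_1_3 by (simp only: One_nat_def)
lemma ev_3_1_3 [simp]: "evl 3 (1,3) = 1" by (simp add: evl_def Emat_def)
lemma evs_3_1_3 [simp]: "evl (3) (Suc 0,3) = 1" using ev_3_1_3 by (simp only: One_nat_def)
lemma ov_1_4 [simp]: "oval (1,4) = 1" by (simp add: oval_def Omat_def)
lemma ovs_1_4 [simp]: "oval (Suc 0,4) = 1" using ov_1_4 by (simp only: One_nat_def)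
lemma ev_1_1_4 [simp]: "evl 1 (1,4) = 1" by (simp add: evl_def Emat_def)
lemma evs_1_1_4 [simp]: "evl (Suc 0) (Suc 0,4) = 1" using ev_1_1_4 by (simp only: One_nat_def)
lemma ev_2_1_4 [simp]: "evl 2 (1,4) = 0" by (simp add: evl_def Emat_def)
lemma evs_2_1_4 [simp]: "evl (2) (Suc 0,4) = 0" using ev_2_1_4 by (simp only: One_nat_def)
lemma ev_3_1_4 [simp]: "evl 3 (1,4) = 0" by (simp add: evl_def Emat_def)
lemma evs_3_1_4 [simp]: "evl (3) (Suc 0,4) = 0" using ev_3_1_4 by (simp only: One_nat_def)
lemma ov_2_1 [simp]: "oval (2,1) = 2" by (simp add: oval_def Omat_def)
lemma ovs_2_1 [simp]: "oval (2,Suc 0) = 2" using ov_2_1 by (simp only: One_nat_def)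
lemma ev_1_2_1 [simp]: "evl 1 (2,1) = 0" by (simp add: evl_def Emat_def)
lemma evs_1_2_1 [simp]: "evl (Suc 0) (2,Suc 0) = 0" using ev_1_2_1 by (simp only: One_nat_def)
lemma ev_2_2_1 [simp]: "evl 2 (2,1) = 1" by (simp add: evl_def Emat_def)
lemma evs_2_2_1 [simp]: "evl (2) (2,Suc 0) = 1" using ev_2_2_1 by (simp only: One_nat_def)
lemma ev_3_2_1 [simp]: "evl 3 (2,1) = 0" by (simp add: evl_def Emat_def)
lemma evs_3_2_1 [simp]: "evl (3) (2,Suc 0) = 0" using ev_3_2_1 by (simp only: One_nat_def)
lemma ov_2_2 [simp]: "oval (2,2) = 22" by (simp add: oval_def Omat_def)
lemma ovs_2_2 [simp]: "oval (2,2) = 22" using ov_2_2 by (simp only: One_nat_def)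
lemma ev_1_2_2 [simp]: "evl 1 (2,2) = 0" by (simp add: evl_def Emat_def)
lemma evs_1_2_2 [simp]: "evl (Suc 0) (2,2) = 0" using ev_1_2_2 by (simp only: One_nat_def)
lemma ev_2_2_2 [simp]: "evl 2 (2,2) = 0" by (simp add: evl_def Emat_def)
lemma evs_2_2_2 [simp]: "evl (2) (2,2) = 0" using ev_2_2_2 by (simp only: One_nat_def)
lemma ev_3_2_2 [simp]: "evl 3 (2,2) = 0" by (simp add: evl_def Emat_def)
lemma evs_3_2_2 [simp]: "evl (3) (2,2) = 0" using ev_3_2_2 by (simp only: One_nat_def)
lemma ov_2_3 [simp]: "oval (2,3) = 3" by (simp add: oval_def Omat_def)
lemma ovs_2_3 [simp]: "oval (2,3) = 3" using ov_2_3 by (simp only: One_nat_def)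
lemma ev_1_2_3 [simp]: "evl 1 (2,3) = 0" by (simp add: evl_def Emat_def)
lemma evs_1_2_3 [simp]: "evl (Suc 0) (2,3) = 0" using ev_1_2_3 by (simp only: One_nat_def)
lemma ev_2_2_3 [simp]: "evl 2 (2,3) = 0" by (simp add: evl_def Emat_def)
lemma evs_2_2_3 [simp]: "evl (2) (2,3) = 0" using ev_2_2_3 by (simp only: One_nat_def)
lemma ev_3_2_3 [simp]: "evl 3 (2,3) = 1" by (simp add: evl_def Emat_def)
lemma evs_3_2_3 [simp]: "evl (3) (2,3) = 1" using ev_3_2_3 by (simp only: One_nat_def)
lemma ov_2_4 [simp]: "oval (2,4) = 28" by (simp add: oval_def Omat_def)
lemma ovs_2_4 [simp]: "oval (2,4) = 28" using ov_2_4 by (simp only: One_nat_def)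
lemma ev_1_2_4 [simp]: "evl 1 (2,4) = 0" by (simp add: evl_def Emat_def)
lemma evs_1_2_4 [simp]: "evl (Suc 0) (2,4) = 0" using ev_1_2_4 by (simp only: One_nat_def)
lemma ev_2_2_4 [simp]: "evl 2 (2,4) = 0" by (simp add: evl_def Emat_def)
lemma evs_2_2_4 [simp]: "evl (2) (2,4) = 0" using ev_2_2_4 by (simp only: One_nat_def)
lemma ev_3_2_4 [simp]: "evl 3 (2,4) = 0" by (simp add: evl_def Emat_def)
lemma evs_3_2_4 [simp]: "evl (3) (2,4) = 0" using ev_3_2_4 by (simp only: One_nat_def)
lemma ov_3_1 [simp]: "oval (3,1) = 11" by (simp add: oval_def Omat_def)
lemma ovs_3_1 [simp]: "oval (3,Suc 0) = 11" using ov_3_1 by (simp only: One_nat_def)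
lemma ev_1_3_1 [simp]: "evl 1 (3,1) = 0" by (simp add: evl_def Emat_def)
lemma evs_1_3_1 [simp]: "evl (Suc 0) (3,Suc 0) = 0" using ev_1_3_1 by (simp only: One_nat_def)
lemma ev_2_3_1 [simp]: "evl 2 (3,1) = 1" by (simp add: evl_def Emat_def)
lemma evs_2_3_1 [simp]: "evl (2) (3,Suc 0) = 1" using ev_2_3_1 by (simp only: One_nat_def)
lemma ev_3_3_1 [simp]: "evl 3 (3,1) = 0" by (simp add: evl_def Emat_def)
lemma evs_3_3_1 [simp]: "evl (3) (3,Suc 0) = 0" using ev_3_3_1 by (simp only: One_nat_def)
lemma ov_3_2 [simp]: "oval (3,2) = 0" by (simp add: oval_def Omat_def)
lemma ovs_3_2 [simp]: "oval (3,2) = 0" using ov_3_2 by (simp only: One_nat_def)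
lemma ev_1_3_2 [simp]: "evl 1 (3,2) = 0" by (simp add: evl_def Emat_def)
lemma evs_1_3_2 [simp]: "evl (Suc 0) (3,2) = 0" using ev_1_3_2 by (simp only: One_nat_def)
lemma ev_2_3_2 [simp]: "evl 2 (3,2) = 0" by (simp add: evl_def Emat_def)
lemma evs_2_3_2 [simp]: "evl (2) (3,2) = 0" using ev_2_3_2 by (simp only: One_nat_def)
lemma ev_3_3_2 [simp]: "evl 3 (3,2) = 0" by (simp add: evl_def Emat_def)
lemma evs_3_3_2 [simp]: "evl (3) (3,2) = 0" using ev_3_3_2 by (simp only: One_nat_def)
lemma ov_3_3 [simp]: "oval (3,3) = 21" by (simp add: oval_def Omat_def)
lemma ovs_3_3 [simp]: "oval (3,3) = 21" using ov_3_3 by (simp only: One_nat_def)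
lemma ev_1_3_3 [simp]: "evl 1 (3,3) = 0" by (simp add: evl_def Emat_def)
lemma evs_1_3_3 [simp]: "evl (Suc 0) (3,3) = 0" using ev_1_3_3 by (simp only: One_nat_def)
lemma ev_2_3_3 [simp]: "evl 2 (3,3) = 0" by (simp add: evl_def Emat_def)
lemma evs_2_3_3 [simp]: "evl (2) (3,3) = 0" using ev_2_3_3 by (simp only: One_nat_def)
lemma ev_3_3_3 [simp]: "evl 3 (3,3) = 0" by (simp add: evl_def Emat_def)
lemma evs_3_3_3 [simp]: "evl (3) (3,3) = 0" using ev_3_3_3 by (simp only: One_nat_def)
lemma ov_3_4 [simp]: "oval (3,4) = 23" by (simp add: oval_def Omat_def)
lemma ovs_3_4 [simp]: "oval (3,4) = 23" using ov_3_4 by (simp only: One_nat_def)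
lemma ev_1_3_4 [simp]: "evl 1 (3,4) = 0" by (simp add: evl_def Emat_def)
lemma evs_1_3_4 [simp]: "evl (Suc 0) (3,4) = 0" using ev_1_3_4 by (simp only: One_nat_def)
lemma ev_2_3_4 [simp]: "evl 2 (3,4) = 0" by (simp add: evl_def Emat_def)
lemma evs_2_3_4 [simp]: "evl (2) (3,4) = 0" using ev_2_3_4 by (simp only: One_nat_def)
lemma ev_3_3_4 [simp]: "evl 3 (3,4) = 1" by (simp add: evl_def Emat_def)
lemma evs_3_3_4 [simp]: "evl (3) (3,4) = 1" using ev_3_3_4 by (simp only: One_nat_def)
lemmas oe_all = ovs_1_1 evs_1_1_1 evs_2_1_1 evs_3_1_1 ovs_1_2 evs_1_1_2 evs_2_1_2 evs_3_1_2 ovs_1_3 evs_1_1_3 evs_2_1_3 evs_3_1_3 ovs_1_4 evs_1_1_4 evs_2_1_4 evs_3_1_4 ovs_2_1 evs_1_2_1 evs_2_2_1 evs_3_2_1 ovs_2_2 evs_1_2_2 evs_2_2_2 evs_3_2_2 ovs_2_3 evs_1_2_3 evs_2_2_3 evs_3_2_3 ovs_2_4 evs_1_2_4 evs_2_2_4 evs_3_2_4 ovs_3_1 evs_1_3_1 evs_2_3_1 evs_3_3_1 ovs_3_2 evs_1_3_2 evs_2_3_2 evs_3_3_2 ovs_3_3 evs_1_3_3 evs_2_3_3 evs_3_3_3 ovs_3_4 evs_1_3_4 evs_2_3_4 evs_3_3_4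

lemma expand:
  assumes "S \<subseteq> items"
  shows "sum f S = (\<Sum>x\<in>items. if x \<in> S then f x else 0)"
proof -
  have "S = items \<inter> S" using assms by blast
  then have "sum f S = sum f (items \<inter> S)" by simp
  also have "\<dots> = (\<Sum>x\<in>items. if x \<in> S then f x else 0)"
    by (rule sum.inter_restrict) (simp add: items_eq)
  finally show ?thesis .
qed

lemma decomp: "u i S = 1000000 * real (card S) + 1000 * sum oval S + sum (evl i) S"
  unfolding u_def uitem_def Bmat_def oval_def evl_def
  by (simp add: sum.distrib sum_distrib_left)

lemma lbnd: "x \<in> items \<Longrightarrow> i \<in> {1,2,3} \<Longrightarrow> uitem i x \<ge> 999997"
  unfolding items_eq by auto

lemma ebnd: "x \<in> items \<Longrightarrow> i \<in> {1,2,3} \<Longrightarrow> evl i x \<ge> (if x = (1,1) then -3 else 0)"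
  unfolding items_eq by auto

lemma oint: "x \<in> items \<Longrightarrow> oval x \<in> \<int>"
  unfolding items_eq by auto

lemma card_le4:
  assumes "S \<subseteq> items" "i \<in> {1,2,3}" "u i S \<le> 4055000"
  shows "card S \<le> 4"
proof -
  have "real (card S) * 999997 \<le> u i S"
    unfolding u_def by (rule sum_bounded_below) (use assms lbnd in blast)
  then have "real (card S) * 999997 \<le> 4055000" using assms(3) by linarith
  then show ?thesis by simp
qed

lemma esum_ge:
  assumes "S \<subseteq> items" "i \<in> {1,2,3}"
  shows "sum (evl i) S \<ge> -3"
proof -
  have "sum (\<lambda>x. if x = (1,1) then -3 else 0) S \<le> sum (evl i) S"
    by (rule sum_mono) (use assms ebnd in blast)
  moreover have "sum (\<lambda>x. if x = (1,1) then (-3::real) else 0) S \<ge> -3"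
  proof -
    have "finite S" using assms(1) by (rule finite_subset) (simp add: items_eq)
    then show ?thesis by (simp add: sum.delta)
  qed
  ultimately show ?thesis by linarith
qed

lemma osum_le:
  assumes "S \<subseteq> items" "i \<in> {1,2,3}" "u i S \<le> 4055000" "card S = 4"
  shows "sum oval S \<le> 55"
proof -
  have "sum oval S \<in> \<int>" by (rule Ints_sum) (use assms oint in blast)
  then obtain n where n: "sum oval S = of_int n" by (auto elim: Ints_cases)
  have "1000 * sum oval S + sum (evl i) S \<le> 55000"
    using assms(3,4) decomp[of i S] by simp
  with esum_ge[OF assms(1,2)] have "1000 * sum oval S \<le> 55003" by linarith
  then have "n \<le> 55" using n by simp
  then show ?thesis using n by simp
qed

theorem proposition3:
  shows "\<not> (\<exists>S\<in>partitions 3 items. \<forall>i\<in>{1..3}. d i (S i) \<ge> MmS 3 (d i) items)"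
proof
  assume "\<exists>S\<in>partitions 3 items. \<forall>i\<in>{1..3}. d i (S i) \<ge> MmS 3 (d i) items"
  then obtain S where S: "S \<in> partitions 3 items"
    and h: "\<forall>i\<in>{1..3}. d i (S i) \<ge> MmS 3 (d i) items" by blast
  have "d 1 (S 1) \<ge> MmS 3 (d 1) items" using h by (auto simp: atLeastAtMost_iff)
  then have h1: "u 1 (S 1) \<le> 4055000" using M1 by (simp add: d_def)
  have "d 2 (S 2) \<ge> MmS 3 (d 2) items" using h by (auto simp: atLeastAtMost_iff)
  then have h2: "u 2 (S 2) \<le> 4055000" using M2 by (simp add: d_def)
  have "d 3 (S 3) \<ge> MmS 3 (d 3) items" using h by (auto simp: atLeastAtMost_iff)
  then have h3: "u 3 (S 3) \<le> 4055000" using M3 by (simp add: d_def)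
  have sub: "S 1 \<subseteq> items" "S 2 \<subseteq> items" "S 3 \<subseteq> items"
    using S unfolding partitions_def by auto
  have disj: "S 1 \<inter> S 2 = {}" "S 1 \<inter> S 3 = {}" "S 2 \<inter> S 3 = {}"
    using S unfolding partitions_def by auto
  have un: "S 1 \<union> S 2 \<union> S 3 = items"
    using S unfolding partitions_def one_three by auto
  have fin: "finite (S 1)" "finite (S 2)" "finite (S 3)"
    using sub by (auto simp: items_eq intro: finite_subset)
  have d12: "(S 1 \<union> S 2) \<inter> S 3 = {}" using disj by blast
  have c: "card (S 1) \<le> 4" "card (S 2) \<le> 4" "card (S 3) \<le> 4"
    using card_le4[OF sub(1) _ h1] card_le4[OF sub(2) _ h2] card_le4[OF sub(3) _ h3] by auto
  have "card items = 12" by (simp add: items_eq)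
  then have "card (S 1) + card (S 2) + card (S 3) = 12"
    unfolding un[symmetric] using fin disj d12
    by (simp add: card_Un_disjoint)
  then have c4: "card (S 1) = 4" "card (S 2) = 4" "card (S 3) = 4" using c by auto
  have o: "sum oval (S 1) \<le> 55" "sum oval (S 2) \<le> 55" "sum oval (S 3) \<le> 55"
    using osum_le[OF sub(1) _ h1 c4(1)] osum_le[OF sub(2) _ h2 c4(2)] osum_le[OF sub(3) _ h3 c4(3)]
    by auto
  have "sum oval items = 165" by (simp add: items_eq)
  then have "sum oval (S 1) + sum oval (S 2) + sum oval (S 3) = 165"
    unfolding un[symmetric] using fin disj d12
    by (simp add: sum.union_disjoint)
  then have o55: "sum oval (S 1) = 55" "sum oval (S 2) = 55" "sum oval (S 3) = 55"
    using o by linarith+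
  have e0: "sum (evl 1) (S 1) \<le> 0" "sum (evl 2) (S 2) \<le> 0" "sum (evl 3) (S 3) \<le> 0"
    using h1 h2 h3 c4 o55 decomp[of 1 "S 1"] decomp[of 2 "S 2"] decomp[of 3 "S 3"] by simp_all
  have cv: "\<forall>x\<in>items. x \<in> S 1 \<or> x \<in> S 2 \<or> x \<in> S 3" using un by blast
  have dj: "\<forall>x\<in>items. \<not> (x \<in> S 1 \<and> x \<in> S 2) \<and> \<not> (x \<in> S 1 \<and> x \<in> S 3) \<and> \<not> (x \<in> S 2 \<and> x \<in> S 3)"
    using disj by blast
  have k1: "(\<Sum>x\<in>S 1. (1::real)) = 4" "(\<Sum>x\<in>S 2. (1::real)) = 4" "(\<Sum>x\<in>S 3. (1::real)) = 4"
    using c4 by simp_all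
  note k = k1[unfolded expand[OF sub(1)] expand[OF sub(2)] expand[OF sub(3)]]
  note oo = o55[unfolded expand[OF sub(1)] expand[OF sub(2)] expand[OF sub(3)]]
  note ee = e0[unfolded expand[OF sub(1)] expand[OF sub(2)] expand[OF sub(3)]]
  note all = k oo ee cv dj
  note all' = all[unfolded items_eq, simplified, unfolded One_nat_def, unfolded oe_all]
  show False using all' by smt
qed

end
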